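(* Let $\Gamma$ be a group and $S$ a $\Gamma$-graded semigroup with local units. The following are equivalent: (1) $S$ is strongly graded; (2) $S_\alpha S_{\alpha^{-1}}=S_\varepsilon$ for every $\alpha\in\Gamma$; (3) $S_\alpha S_{\alpha^{-1}}$ contains all the local units of $S$ for every $\alpha\in\Gamma$. Moreover, if $S$ is an inverse semigroup, these are also equivalent to each of: (4) $E(S)=\{ss^{-1}:s\in S_\alpha\}$ for every $\alpha$; (5) $E(S)=\{s^{-1}s:s\in S_\alpha\}$ for every $\alpha$; (6) for all $u\in E(S)$ and $\alpha\in\Gamma$ there is $s\in S_\alpha$ with $u\,\mathscr L\,s$; (7) for all $u\in E(S)$ and $\alpha\in\Gamma$ there is $s\in S_\alpha$ with $u\,\mathscr R\,s$.
   Context: Semigroups have a zero; $S$ is $\Gamma$-graded via $\deg:S\setminus\{0\}\to\Gamma$ with $\deg(st)=\deg(s)\deg(t)$ whenever $st\neq0$; $S_\alpha=\deg^{-1}(\alpha)\cup\{0\}$, $\varepsilon$ the identity of $\Gamma$, and $S_\alpha S_\beta=\{st:s\in S_\alpha,t\in S_\beta\}$. $S$ is strongly graded if $S_\alpha S_\beta=S_{\alpha\beta}$ for all $\alpha,\beta$. $E(S)$ is the set of idempotents. $S$ has local units if for each $s$ there are $u,v\in E(S)$ with $us=s=sv$; such idempotents are called local units. Green's relations: $s\,\mathscr L\,t$ iff $S^1s=S^1t$ and $s\,\mathscr R\,t$ iff $sS^1=tS^1$, where $S^1$ is $S$ with an identity adjoined. *)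

theory Defs
  imports "HOL-Algebra.Group"
begin

text \<open>A semigroup with zero is modelled as a type of class semigroup_mult and mult_zero
  (the whole type is the semigroup S; 0 is its zero).\<close>

definition gr_comp :: "('g, 'b) monoid_scheme \<Rightarrow> ('a::{semigroup_mult,mult_zero} \<Rightarrow> 'g) \<Rightarrow> 'g \<Rightarrow> 'a set"
  where "gr_comp G deg \<alpha> = {s. s \<noteq> 0 \<and> deg s = \<alpha>} \<union> {0}"

definition graded :: "('g, 'b) monoid_scheme \<Rightarrow> ('a::{semigroup_mult,mult_zero} \<Rightarrow> 'g) \<Rightarrow> bool"
  where "graded G deg \<longleftrightarrow>
     (\<forall>s. s \<noteq> 0 \<longrightarrow> deg s \<in> carrier G) \<and>
     (\<forall>s t. s * t \<noteq> 0 \<longrightarrow> deg (s * t) = deg s \<otimes>\<^bsub>G\<^esub> deg t)"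

definition set_mult :: "'a::times set \<Rightarrow> 'a set \<Rightarrow> 'a set"
  where "set_mult A B = {s * t | s t. s \<in> A \<and> t \<in> B}"

definition strongly_graded :: "('g, 'b) monoid_scheme \<Rightarrow> ('a::{semigroup_mult,mult_zero} \<Rightarrow> 'g) \<Rightarrow> bool"
  where "strongly_graded G deg \<longleftrightarrow>
     (\<forall>\<alpha>\<in>carrier G. \<forall>\<beta>\<in>carrier G.
        set_mult (gr_comp G deg \<alpha>) (gr_comp G deg \<beta>) = gr_comp G deg (\<alpha> \<otimes>\<^bsub>G\<^esub> \<beta>))"

definition idempotents :: "'a::semigroup_mult set"
  where "idempotents = {e. e * e = e}"

definition has_local_units :: "'a::semigroup_mult itself \<Rightarrow> bool"
  where "has_local_units _ \<longleftrightarrow>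
     (\<forall>s::'a. \<exists>u v. u \<in> idempotents \<and> v \<in> idempotents \<and> u * s = s \<and> s * v = s)"

definition local_units :: "'a::semigroup_mult set"
  where "local_units = {u. u \<in> idempotents \<and> (\<exists>s. u * s = s \<or> s * u = s)}"

definition inverse_semigroup :: "'a::semigroup_mult itself \<Rightarrow> bool"
  where "inverse_semigroup _ \<longleftrightarrow> (\<forall>s::'a. \<exists>!t. s * t * s = s \<and> t * s * t = t)"

definition sinv :: "'a::semigroup_mult \<Rightarrow> 'a"
  where "sinv s = (THE t. s * t * s = s \<and> t * s * t = t)"

text \<open>Green's relations via S^1 s = insert s (S s).\<close>
definition green_L :: "'a::semigroup_mult \<Rightarrow> 'a \<Rightarrow> bool"
  where "green_L s t \<longleftrightarrow> insert s (range (\<lambda>x. x * s)) = insert t (range (\<lambda>x. x * t))"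

definition green_R :: "'a::semigroup_mult \<Rightarrow> 'a \<Rightarrow> bool"
  where "green_R s t \<longleftrightarrow> insert s (range (\<lambda>x. s * x)) = insert t (range (\<lambda>x. t * x))"

end

theory Submission
  imports Defs
begin


lemma gm:
  assumes "graded G deg" "s \<in> gr_comp G deg \<alpha>" "t \<in> gr_comp G deg \<beta>"
  shows "s * t \<in> gr_comp G deg (\<alpha> \<otimes>\<^bsub>G\<^esub> \<beta>)"
proof (cases "s * t = 0")
  case True thus ?thesis by (simp add: gr_comp_def)
next
  case False
  then have "s \<noteq> 0" "t \<noteq> 0" by auto
  with assms False show ?thesis by (auto simp: gr_comp_def graded_def)
qed

lemma sm_sub:
  assumes "graded G deg"
  shows "set_mult (gr_comp G deg \<alpha>) (gr_comp G deg \<beta>) \<subseteq> gr_comp G deg (\<alpha> \<otimes>\<^bsub>G\<^esub> \<beta>)"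
  using gm[OF assms] by (auto simp: set_mult_def)

lemma idem1:
  assumes "group G" "graded G deg" "e * e = e"
  shows "e \<in> gr_comp G deg \<one>\<^bsub>G\<^esub>"
proof (cases "e = 0")
  case True thus ?thesis by (simp add: gr_comp_def)
next
  case False
  then have c: "deg e \<in> carrier G" using assms(2) by (auto simp: graded_def)
  have "deg e = deg e \<otimes>\<^bsub>G\<^esub> deg e" using assms False by (metis graded_def)
  then have "deg e = \<one>\<^bsub>G\<^esub>" using group.l_cancel_one'[OF assms(1) c c] by simp
  thus ?thesis by (simp add: gr_comp_def)
qed

lemma inv_props:
  assumes "inverse_semigroup TYPE('a::{semigroup_mult,mult_zero})"
  shows "(s::'a) * sinv s * s = s \<and> sinv s * s * sinv s = sinv s"
proof -
  have "\<exists>!t. s * t * s = s \<and> t * s * t = t" using assms by (simp add: inverse_semigroup_def)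
  thus ?thesis unfolding sinv_def by (rule theI')
qed

lemma inv_unique:
  assumes "inverse_semigroup TYPE('a::{semigroup_mult,mult_zero})"
    and "(s::'a) * t * s = s" "t * s * t = t"
  shows "sinv s = t"
proof -
  have "\<exists>!t. s * t * s = s \<and> t * s * t = t" using assms by (simp add: inverse_semigroup_def)
  then show ?thesis unfolding sinv_def by (rule the1_equality) (simp add: assms(2,3))
qed

lemma sinv_deg:
  assumes "group G" "graded G deg" "inverse_semigroup TYPE('a::{semigroup_mult,mult_zero})"
    and "(s::'a) \<in> gr_comp G deg \<alpha>" "\<alpha> \<in> carrier G"
  shows "sinv s \<in> gr_comp G deg (inv\<^bsub>G\<^esub> \<alpha>)"
proof (cases "sinv s = 0")
  case True thus ?thesis by (simp add: gr_comp_def)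
next
  case False
  let ?t = "sinv s"
  have p: "s * ?t * s = s" "?t * s * ?t = ?t" using inv_props[OF assms(3)] by auto
  have s0: "s \<noteq> 0" using p(2) False by (metis mult_zero_left mult_zero_right)
  have st0: "s * ?t \<noteq> 0" using p(1) s0 by (metis mult_zero_left)
  have ds: "deg s = \<alpha>" using assms(4) s0 by (simp add: gr_comp_def)
  have "s * ?t * (s * ?t) = s * ?t" using p(1) by (metis mult.assoc)
  then have "s * ?t \<in> gr_comp G deg \<one>\<^bsub>G\<^esub>" using idem1 assms by blast
  then have "deg (s * ?t) = \<one>\<^bsub>G\<^esub>" using st0 by (simp add: gr_comp_def)
  then have e: "\<alpha> \<otimes>\<^bsub>G\<^esub> deg ?t = \<one>\<^bsub>G\<^esub>" using assms(2) st0 ds by (simp add: graded_def)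
  have c: "deg ?t \<in> carrier G" using assms(2) False by (simp add: graded_def)
  have "inv\<^bsub>G\<^esub> \<alpha> = deg ?t"
    using group.inv_equality[OF assms(1) e c assms(5)]
    by (metis assms(1) c group.inv_inv)
  thus ?thesis using False by (simp add: gr_comp_def)
qed

lemma lu_iff: "(u::'a::semigroup_mult) \<in> local_units \<longleftrightarrow> u * u = u"
  unfolding local_units_def idempotents_def by auto

lemma sg_e:
  assumes "group G" "graded G deg" "strongly_graded G deg" "\<alpha> \<in> carrier G" "e * e = e"
  shows "e \<in> set_mult (gr_comp G deg \<alpha>) (gr_comp G deg (inv\<^bsub>G\<^esub> \<alpha>))"
proof -
  have "e \<in> gr_comp G deg \<one>\<^bsub>G\<^esub>" using idem1 assms by blast
  moreover have "\<alpha> \<otimes>\<^bsub>G\<^esub> inv\<^bsub>G\<^esub> \<alpha> = \<one>\<^bsub>G\<^esub>" using assms(1,4) by (simp add: group.r_inv)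
  ultimately show ?thesis using assms(3,4) group.inv_closed[OF assms(1,4)]
    unfolding strongly_graded_def by metis
qed

lemma sg_e':
  assumes "group G" "graded G deg" "strongly_graded G deg" "\<alpha> \<in> carrier G" "e * e = e"
  shows "e \<in> set_mult (gr_comp G deg (inv\<^bsub>G\<^esub> \<alpha>)) (gr_comp G deg \<alpha>)"
proof -
  have "e \<in> gr_comp G deg \<one>\<^bsub>G\<^esub>" using idem1 assms by blast
  moreover have "inv\<^bsub>G\<^esub> \<alpha> \<otimes>\<^bsub>G\<^esub> \<alpha> = \<one>\<^bsub>G\<^esub>" using assms(1,4) by (simp add: group.l_inv)
  ultimately show ?thesis using assms(3,4) group.inv_closed[OF assms(1,4)]
    unfolding strongly_graded_def by metis
qed

lemma sg_2:
  assumes "group G" "graded G deg" "strongly_graded G deg" "\<alpha> \<in> carrier G"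
  shows "set_mult (gr_comp G deg \<alpha>) (gr_comp G deg (inv\<^bsub>G\<^esub> \<alpha>)) = gr_comp G deg \<one>\<^bsub>G\<^esub>"
proof -
  have "\<alpha> \<otimes>\<^bsub>G\<^esub> inv\<^bsub>G\<^esub> \<alpha> = \<one>\<^bsub>G\<^esub>" using assms(1,4) by (simp add: group.r_inv)
  thus ?thesis using assms(3,4) group.inv_closed[OF assms(1,4)]
    unfolding strongly_graded_def by metis
qed

lemma from3:
  assumes "group G" "graded G deg" "has_local_units TYPE('a::{semigroup_mult,mult_zero})"
    and h: "\<forall>\<alpha>\<in>carrier G. (local_units :: 'a set)
                  \<subseteq> set_mult (gr_comp G deg \<alpha>) (gr_comp G deg (inv\<^bsub>G\<^esub> \<alpha>))"
  shows "strongly_graded G (deg :: 'a \<Rightarrow> 'g)"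
  unfolding strongly_graded_def
proof (intro ballI equalityI)
  fix \<alpha> \<beta> assume a: "\<alpha> \<in> carrier G" and b: "\<beta> \<in> carrier G"
  show "set_mult (gr_comp G deg \<alpha>) (gr_comp G deg \<beta>) \<subseteq> gr_comp G deg (\<alpha> \<otimes>\<^bsub>G\<^esub> \<beta>)"
    using sm_sub[OF assms(2)] .
  show "gr_comp G deg (\<alpha> \<otimes>\<^bsub>G\<^esub> \<beta>) \<subseteq> set_mult (gr_comp G deg \<alpha>) (gr_comp G deg \<beta>)"
  proof
    fix s assume s: "s \<in> gr_comp G deg (\<alpha> \<otimes>\<^bsub>G\<^esub> \<beta>)"
    show "s \<in> set_mult (gr_comp G deg \<alpha>) (gr_comp G deg \<beta>)"
    proof (cases "s = 0")
      case True
      then show ?thesis unfolding set_mult_def gr_comp_def by force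
    next
      case False
      obtain u where u: "u * u = u" "u * s = s"
        using assms(3) unfolding has_local_units_def idempotents_def by blast
      have "u \<in> local_units" using u lu_iff by blast
      then obtain x y where xy: "u = x * y" "x \<in> gr_comp G deg \<alpha>" "y \<in> gr_comp G deg (inv\<^bsub>G\<^esub> \<alpha>)"
        using h a unfolding set_mult_def by blast
      have "y * s \<in> gr_comp G deg (inv\<^bsub>G\<^esub> \<alpha> \<otimes>\<^bsub>G\<^esub> (\<alpha> \<otimes>\<^bsub>G\<^esub> \<beta>))"
        using gm[OF assms(2) xy(3) s] .
      moreover have "inv\<^bsub>G\<^esub> \<alpha> \<otimes>\<^bsub>G\<^esub> (\<alpha> \<otimes>\<^bsub>G\<^esub> \<beta>) = \<beta>"
        using a b assms(1) by (simp add: group.inv_solve_left' monoid.m_closed group.is_monoid)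
      moreover have "s = x * (y * s)" using u xy by (simp add: mult.assoc)
      ultimately show ?thesis using xy unfolding set_mult_def by auto
    qed
  qed
qed

lemma p4:
  assumes "group G" "graded G deg" "strongly_graded G deg" "\<alpha> \<in> carrier G"
    and inv: "inverse_semigroup TYPE('a::{semigroup_mult,mult_zero})"
  shows "(idempotents :: 'a set) = {s * sinv s | s. s \<in> gr_comp G (deg::'a\<Rightarrow>'g) \<alpha>}"
proof (intro equalityI subsetI)
  fix x assume "x \<in> {s * sinv s | s. s \<in> gr_comp G (deg::'a\<Rightarrow>'g) \<alpha>}"
  then obtain s where x: "x = s * sinv s" by blast
  have "s * sinv s * (s * sinv s) = (s * sinv s * s) * sinv s" by (simp add: mult.assoc)
  also have "\<dots> = s * sinv s" using inv_props[OF inv] by simp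
  finally show "x \<in> idempotents" using x by (simp add: idempotents_def)
next
  fix e :: 'a assume "e \<in> idempotents"
  then have ee: "e * e = e" by (simp add: idempotents_def)
  obtain a b where ab: "e = a * b" "a \<in> gr_comp G deg \<alpha>" "b \<in> gr_comp G deg (inv\<^bsub>G\<^esub> \<alpha>)"
    using sg_e[OF assms(1-4) ee] unfolding set_mult_def by blast
  define t where "t = sinv a"
  have p: "a * t * a = a" "t * a * t = t" using inv_props[OF inv] t_def by auto
  have h: "a * t * e = e" using p ab(1) by (metis mult.assoc)
  have h': "a * (t * e) = e" using h by (simp add: mult.assoc)
  have s: "e * a \<in> gr_comp G deg \<alpha>"
    using gm[OF assms(2) idem1[OF assms(1,2) ee] ab(2)] assms(1,4) by (metis group.is_monoid monoid.l_one)
  have 1: "e * a * (t * e) * (e * a) = e * a"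
  proof -
    have "e * a * (t * e) * (e * a) = e * (a * (t * e)) * e * a" by (simp add: mult.assoc)
    also have "\<dots> = e * a" using h' ee by simp
    finally show ?thesis .
  qed
  have 2: "t * e * (e * a) * (t * e) = t * e"
  proof -
    have "t * e * (e * a) * (t * e) = t * (e * e) * (a * (t * e))" by (simp add: mult.assoc)
    also have "\<dots> = t * e" using h' ee by (simp add: mult.assoc)
    finally show ?thesis .
  qed
  have "sinv (e * a) = t * e" using inv_unique[OF inv 1 2] .
  moreover have "e * a * (t * e) = e * (a * (t * e))" by (simp add: mult.assoc)
  ultimately have "e = e * a * sinv (e * a)" using h' ee by simp
  then show "e \<in> {s * sinv s | s. s \<in> gr_comp G (deg::'a\<Rightarrow>'g) \<alpha>}" using s by blast
qed

lemma p5: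
  assumes "group G" "graded G deg" "strongly_graded G deg" "\<alpha> \<in> carrier G"
    and inv: "inverse_semigroup TYPE('a::{semigroup_mult,mult_zero})"
  shows "(idempotents :: 'a set) = {sinv s * s | s. s \<in> gr_comp G (deg::'a\<Rightarrow>'g) \<alpha>}"
proof (intro equalityI subsetI)
  fix x assume "x \<in> {sinv s * s | s. s \<in> gr_comp G (deg::'a\<Rightarrow>'g) \<alpha>}"
  then obtain s where x: "x = sinv s * s" by blast
  have "sinv s * s * (sinv s * s) = (sinv s * s * sinv s) * s" by (simp add: mult.assoc)
  also have "\<dots> = sinv s * s" using inv_props[OF inv] by simp
  finally show "x \<in> idempotents" using x by (simp add: idempotents_def)
next
  fix e :: 'a assume "e \<in> idempotents"
  then have ee: "e * e = e" by (simp add: idempotents_def)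
  obtain a b where ab: "e = b * a" "a \<in> gr_comp G deg \<alpha>" "b \<in> gr_comp G deg (inv\<^bsub>G\<^esub> \<alpha>)"
    using sg_e'[OF assms(1-4) ee] unfolding set_mult_def by blast
  define t where "t = sinv a"
  have p: "a * t * a = a" "t * a * t = t" using inv_props[OF inv] t_def by auto
  have h: "e * (t * a) = e" using p ab(1) by (metis mult.assoc)
  have s: "a * e \<in> gr_comp G deg \<alpha>"
    using gm[OF assms(2) ab(2) idem1[OF assms(1,2) ee]] assms(1,4) by (metis group.is_monoid monoid.r_one)
  have 1: "a * e * (e * t) * (a * e) = a * e"
  proof -
    have "a * e * (e * t) * (a * e) = a * (e * e) * (t * a) * e" by (simp add: mult.assoc)
    also have "\<dots> = a * e" using h ee by (simp add: mult.assoc)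
    finally show ?thesis .
  qed
  have 2: "e * t * (a * e) * (e * t) = e * t"
  proof -
    have "e * t * (a * e) * (e * t) = (e * (t * a)) * (e * e) * t" by (simp add: mult.assoc)
    also have "\<dots> = e * t" using h ee by (simp add: mult.assoc)
    finally show ?thesis .
  qed
  have "sinv (a * e) = e * t" using inv_unique[OF inv 1 2] .
  moreover have "e * t * (a * e) = e * (t * a) * e" by (simp add: mult.assoc)
  ultimately have "e = sinv (a * e) * (a * e)" using h ee by simp
  then show "e \<in> {sinv s * s | s. s \<in> gr_comp G (deg::'a\<Rightarrow>'g) \<alpha>}" using s by blast
qed

lemma from4:
  assumes "group G" "graded G deg" "inverse_semigroup TYPE('a::{semigroup_mult,mult_zero})"
    and h: "\<forall>\<alpha>\<in>carrier G. (idempotents :: 'a set) = {s * sinv s | s. s \<in> gr_comp G (deg::'a\<Rightarrow>'g) \<alpha>}"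
  shows "\<forall>\<alpha>\<in>carrier G. (local_units :: 'a set)
                  \<subseteq> set_mult (gr_comp G deg \<alpha>) (gr_comp G deg (inv\<^bsub>G\<^esub> \<alpha>))"
proof (intro ballI subsetI)
  fix \<alpha> u assume a: "\<alpha> \<in> carrier G" and "u \<in> (local_units :: 'a set)"
  then have "u \<in> idempotents" by (simp add: lu_iff idempotents_def)
  then obtain s where s: "u = s * sinv s" "s \<in> gr_comp G deg \<alpha>" using h a by blast
  have "sinv s \<in> gr_comp G deg (inv\<^bsub>G\<^esub> \<alpha>)" using sinv_deg[OF assms(1-3) s(2) a] .
  then show "u \<in> set_mult (gr_comp G deg \<alpha>) (gr_comp G deg (inv\<^bsub>G\<^esub> \<alpha>))"
    using s unfolding set_mult_def by blast
qed

lemma from5: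
  assumes "group G" "graded G deg" "inverse_semigroup TYPE('a::{semigroup_mult,mult_zero})"
    and h: "\<forall>\<alpha>\<in>carrier G. (idempotents :: 'a set) = {sinv s * s | s. s \<in> gr_comp G (deg::'a\<Rightarrow>'g) \<alpha>}"
  shows "\<forall>\<alpha>\<in>carrier G. (local_units :: 'a set)
                  \<subseteq> set_mult (gr_comp G deg \<alpha>) (gr_comp G deg (inv\<^bsub>G\<^esub> \<alpha>))"
proof (intro ballI subsetI)
  fix \<alpha> u assume a: "\<alpha> \<in> carrier G" and "u \<in> (local_units :: 'a set)"
  then have "u \<in> idempotents" by (simp add: lu_iff idempotents_def)
  moreover have ia: "inv\<^bsub>G\<^esub> \<alpha> \<in> carrier G" using a assms(1) by (simp add: group.inv_closed)
  ultimately obtain s where s: "u = sinv s * s" "s \<in> gr_comp G deg (inv\<^bsub>G\<^esub> \<alpha>)" using h by blast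
  have "sinv s \<in> gr_comp G deg (inv\<^bsub>G\<^esub> (inv\<^bsub>G\<^esub> \<alpha>))" using sinv_deg[OF assms(1-3) s(2) ia] .
  then have "sinv s \<in> gr_comp G deg \<alpha>" using a assms(1) by (metis group.inv_inv)
  then show "u \<in> set_mult (gr_comp G deg \<alpha>) (gr_comp G deg (inv\<^bsub>G\<^esub> \<alpha>))"
    using s unfolding set_mult_def by blast
qed

lemma p6:
  assumes "group G" "graded G deg" "strongly_graded G deg" "\<alpha> \<in> carrier G"
    and inv: "inverse_semigroup TYPE('a::{semigroup_mult,mult_zero})"
    and u: "(u::'a) \<in> idempotents"
  shows "\<exists>s\<in>gr_comp G (deg::'a\<Rightarrow>'g) \<alpha>. green_L u s"
proof -
  obtain s where s: "u = sinv s * s" "s \<in> gr_comp G deg \<alpha>" using p5[OF assms(1-5)] u by blast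
  have p: "s * sinv s * s = s" using inv_props[OF inv] by simp
  have "green_L u s" unfolding green_L_def
  proof (intro equalityI subsetI)
    fix x assume "x \<in> insert u (range (\<lambda>x. x * u))"
    then show "x \<in> insert s (range (\<lambda>x. x * s))" using s(1) by (auto simp: mult.assoc[symmetric])
  next
    fix x assume "x \<in> insert s (range (\<lambda>x. x * s))"
    moreover have "s = s * u" using s(1) p by (simp add: mult.assoc)
    moreover have "\<And>y. y * s = (y * s) * u" using s(1) p by (metis mult.assoc)
    ultimately show "x \<in> insert u (range (\<lambda>x. x * u))" by blast
  qed
  then show ?thesis using s by blast
qed

lemma p7:
  assumes "group G" "graded G deg" "strongly_graded G deg" "\<alpha> \<in> carrier G"
    and inv: "inverse_semigroup TYPE('a::{semigroup_mult,mult_zero})"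
    and u: "(u::'a) \<in> idempotents"
  shows "\<exists>s\<in>gr_comp G (deg::'a\<Rightarrow>'g) \<alpha>. green_R u s"
proof -
  obtain s where s: "u = s * sinv s" "s \<in> gr_comp G deg \<alpha>" using p4[OF assms(1-5)] u by blast
  have p: "s * sinv s * s = s" using inv_props[OF inv] by simp
  have "green_R u s" unfolding green_R_def
  proof (intro equalityI subsetI)
    fix x assume "x \<in> insert u (range (\<lambda>x. u * x))"
    then show "x \<in> insert s (range (\<lambda>x. s * x))" using s(1) by (auto simp: mult.assoc)
  next
    fix x assume "x \<in> insert s (range (\<lambda>x. s * x))"
    moreover have "s = u * s" using s(1) p by (simp add: mult.assoc)
    moreover have "\<And>y. s * y = u * (s * y)" using s(1) p by (metis mult.assoc)
    ultimately show "x \<in> insert u (range (\<lambda>x. u * x))" by blast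
  qed
  then show ?thesis using s by blast
qed

lemma from6:
  assumes "group G" "graded G deg" "inverse_semigroup TYPE('a::{semigroup_mult,mult_zero})"
    and h: "\<forall>u\<in>(idempotents :: 'a set). \<forall>\<alpha>\<in>carrier G. \<exists>s\<in>gr_comp G (deg::'a\<Rightarrow>'g) \<alpha>. green_L u s"
  shows "\<forall>\<alpha>\<in>carrier G. (local_units :: 'a set)
                  \<subseteq> set_mult (gr_comp G deg \<alpha>) (gr_comp G deg (inv\<^bsub>G\<^esub> \<alpha>))"
proof (intro ballI subsetI)
  fix \<alpha> u assume a: "\<alpha> \<in> carrier G" and "u \<in> (local_units :: 'a set)"
  then have uu: "u * u = u" by (simp add: lu_iff)
  then have "u \<in> idempotents" by (simp add: idempotents_def)
  moreover have ia: "inv\<^bsub>G\<^esub> \<alpha> \<in> carrier G" using a assms(1) by (simp add: group.inv_closed)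
  ultimately obtain s where s: "green_L u s" "s \<in> gr_comp G deg (inv\<^bsub>G\<^esub> \<alpha>)" using h by blast
  have p: "s * sinv s * s = s" using inv_props[OF assms(3)] by simp
  have "u \<in> insert s (range (\<lambda>x. x * s))" using s(1) unfolding green_L_def by blast
  then have eq: "u * sinv s * s = u"
  proof
    assume "u = s" then show ?thesis using p by simp
  next
    assume "u \<in> range (\<lambda>x. x * s)"
    then obtain y where "u = y * s" by blast
    then show ?thesis using p by (simp add: mult.assoc)
  qed
  have "sinv s \<in> gr_comp G deg (inv\<^bsub>G\<^esub> (inv\<^bsub>G\<^esub> \<alpha>))" using sinv_deg[OF assms(1-3) s(2) ia] .
  then have "sinv s \<in> gr_comp G deg \<alpha>" using a assms(1) by (metis group.inv_inv)
  then have "u * sinv s \<in> gr_comp G deg \<alpha>"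
    using gm[OF assms(2) idem1[OF assms(1,2) uu]] a assms(1) by (metis group.is_monoid monoid.l_one)
  then show "u \<in> set_mult (gr_comp G deg \<alpha>) (gr_comp G deg (inv\<^bsub>G\<^esub> \<alpha>))"
    using s(2) eq unfolding set_mult_def by force
qed

lemma from7:
  assumes "group G" "graded G deg" "inverse_semigroup TYPE('a::{semigroup_mult,mult_zero})"
    and h: "\<forall>u\<in>(idempotents :: 'a set). \<forall>\<alpha>\<in>carrier G. \<exists>s\<in>gr_comp G (deg::'a\<Rightarrow>'g) \<alpha>. green_R u s"
  shows "\<forall>\<alpha>\<in>carrier G. (local_units :: 'a set)
                  \<subseteq> set_mult (gr_comp G deg \<alpha>) (gr_comp G deg (inv\<^bsub>G\<^esub> \<alpha>))"
proof (intro ballI subsetI)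
  fix \<alpha> u assume a: "\<alpha> \<in> carrier G" and "u \<in> (local_units :: 'a set)"
  then have uu: "u * u = u" by (simp add: lu_iff)
  then have "u \<in> idempotents" by (simp add: idempotents_def)
  moreover have ia: "inv\<^bsub>G\<^esub> \<alpha> \<in> carrier G" using a assms(1) by (simp add: group.inv_closed)
  ultimately obtain s where s: "green_R u s" "s \<in> gr_comp G deg \<alpha>" using h a by blast
  have p: "s * sinv s * s = s" using inv_props[OF assms(3)] by simp
  have "u \<in> insert s (range (\<lambda>x. s * x))" using s(1) unfolding green_R_def by blast
  then have eq: "s * (sinv s * u) = u"
  proof
    assume "u = s" then show ?thesis using p by (simp add: mult.assoc)
  next
    assume "u \<in> range (\<lambda>x. s * x)"
    then obtain y where "u = s * y" by blast
    then show ?thesis using p by (metis mult.assoc)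
  qed
  have "sinv s \<in> gr_comp G deg (inv\<^bsub>G\<^esub> \<alpha>)" using sinv_deg[OF assms(1-3) s(2) a] .
  then have "sinv s * u \<in> gr_comp G deg (inv\<^bsub>G\<^esub> \<alpha>)"
    using gm[OF assms(2) _ idem1[OF assms(1,2) uu]] ia assms(1) by (metis group.is_monoid monoid.r_one)
  then show "u \<in> set_mult (gr_comp G deg \<alpha>) (gr_comp G deg (inv\<^bsub>G\<^esub> \<alpha>))"
    using s(2) eq unfolding set_mult_def by force
qed


theorem proposition2p12:
  fixes G :: "('g, 'b) monoid_scheme"
    and deg :: "'a::{semigroup_mult,mult_zero} \<Rightarrow> 'g"
  assumes "group G"
    and "graded G deg"
    and "has_local_units TYPE('a)"
  shows "(strongly_graded G deg \<longleftrightarrow>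
            (\<forall>\<alpha>\<in>carrier G. set_mult (gr_comp G deg \<alpha>) (gr_comp G deg (inv\<^bsub>G\<^esub> \<alpha>))
                               = gr_comp G deg \<one>\<^bsub>G\<^esub>))
       \<and> (strongly_graded G deg \<longleftrightarrow>
            (\<forall>\<alpha>\<in>carrier G. (local_units :: 'a set)
                  \<subseteq> set_mult (gr_comp G deg \<alpha>) (gr_comp G deg (inv\<^bsub>G\<^esub> \<alpha>))))
       \<and> (inverse_semigroup TYPE('a) \<longrightarrow>
            (strongly_graded G deg \<longleftrightarrow>
               (\<forall>\<alpha>\<in>carrier G. (idempotents :: 'a set) = {s * sinv s | s. s \<in> gr_comp G deg \<alpha>}))
          \<and> (strongly_graded G deg \<longleftrightarrow>
               (\<forall>\<alpha>\<in>carrier G. (idempotents :: 'a set) = {sinv s * s | s. s \<in> gr_comp G deg \<alpha>}))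
          \<and> (strongly_graded G deg \<longleftrightarrow>
               (\<forall>u\<in>(idempotents :: 'a set). \<forall>\<alpha>\<in>carrier G. \<exists>s\<in>gr_comp G deg \<alpha>. green_L u s))
          \<and> (strongly_graded G deg \<longleftrightarrow>
               (\<forall>u\<in>(idempotents :: 'a set). \<forall>\<alpha>\<in>carrier G. \<exists>s\<in>gr_comp G deg \<alpha>. green_R u s)))"
proof -
  note A = assms(1,2,3)
  have c3: "strongly_graded G deg \<longleftrightarrow>
            (\<forall>\<alpha>\<in>carrier G. (local_units :: 'a set)
                  \<subseteq> set_mult (gr_comp G deg \<alpha>) (gr_comp G deg (inv\<^bsub>G\<^esub> \<alpha>)))"
  proof
    assume sg: "strongly_graded G deg"
    show "\<forall>\<alpha>\<in>carrier G. (local_units :: 'a set)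
                  \<subseteq> set_mult (gr_comp G deg \<alpha>) (gr_comp G deg (inv\<^bsub>G\<^esub> \<alpha>))"
      using sg_e[OF assms(1,2) sg] lu_iff by blast
  next
    assume h: "\<forall>\<alpha>\<in>carrier G. (local_units :: 'a set)
                  \<subseteq> set_mult (gr_comp G deg \<alpha>) (gr_comp G deg (inv\<^bsub>G\<^esub> \<alpha>))"
    show "strongly_graded G deg" using from3[OF A h] .
  qed
  have c2: "strongly_graded G deg \<longleftrightarrow>
            (\<forall>\<alpha>\<in>carrier G. set_mult (gr_comp G deg \<alpha>) (gr_comp G deg (inv\<^bsub>G\<^esub> \<alpha>))
                               = gr_comp G deg \<one>\<^bsub>G\<^esub>)"
  proof
    assume sg: "strongly_graded G deg"
    show "\<forall>\<alpha>\<in>carrier G. set_mult (gr_comp G deg \<alpha>) (gr_comp G deg (inv\<^bsub>G\<^esub> \<alpha>))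
                               = gr_comp G deg \<one>\<^bsub>G\<^esub>" using sg_2[OF assms(1,2) sg] by blast
  next
    assume h: "\<forall>\<alpha>\<in>carrier G. set_mult (gr_comp G deg \<alpha>) (gr_comp G deg (inv\<^bsub>G\<^esub> \<alpha>))
                               = gr_comp G deg \<one>\<^bsub>G\<^esub>"
    have "\<forall>\<alpha>\<in>carrier G. (local_units :: 'a set)
                  \<subseteq> set_mult (gr_comp G deg \<alpha>) (gr_comp G deg (inv\<^bsub>G\<^esub> \<alpha>))"
      using h idem1[OF assms(1,2)] lu_iff by blast
    then show "strongly_graded G deg" using c3 by blast
  qed
  have inv: "inverse_semigroup TYPE('a) \<longrightarrow>
            (strongly_graded G deg \<longleftrightarrow>
               (\<forall>\<alpha>\<in>carrier G. (idempotents :: 'a set) = {s * sinv s | s. s \<in> gr_comp G deg \<alpha>}))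
          \<and> (strongly_graded G deg \<longleftrightarrow>
               (\<forall>\<alpha>\<in>carrier G. (idempotents :: 'a set) = {sinv s * s | s. s \<in> gr_comp G deg \<alpha>}))
          \<and> (strongly_graded G deg \<longleftrightarrow>
               (\<forall>u\<in>(idempotents :: 'a set). \<forall>\<alpha>\<in>carrier G. \<exists>s\<in>gr_comp G deg \<alpha>. green_L u s))
          \<and> (strongly_graded G deg \<longleftrightarrow>
               (\<forall>u\<in>(idempotents :: 'a set). \<forall>\<alpha>\<in>carrier G. \<exists>s\<in>gr_comp G deg \<alpha>. green_R u s))"
  proof
    assume i: "inverse_semigroup TYPE('a)"
    have e4: "strongly_graded G deg \<longleftrightarrow>
               (\<forall>\<alpha>\<in>carrier G. (idempotents :: 'a set) = {s * sinv s | s. s \<in> gr_comp G deg \<alpha>})"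
    proof
      assume sg: "strongly_graded G deg"
      show "\<forall>\<alpha>\<in>carrier G. (idempotents :: 'a set) = {s * sinv s | s. s \<in> gr_comp G deg \<alpha>}"
        using p4[OF assms(1,2) sg _ i] by blast
    next
      assume h: "\<forall>\<alpha>\<in>carrier G. (idempotents :: 'a set) = {s * sinv s | s. s \<in> gr_comp G deg \<alpha>}"
      show "strongly_graded G deg" using from4[OF assms(1,2) i h] c3 by blast
    qed
    have e5: "strongly_graded G deg \<longleftrightarrow>
               (\<forall>\<alpha>\<in>carrier G. (idempotents :: 'a set) = {sinv s * s | s. s \<in> gr_comp G deg \<alpha>})"
    proof
      assume sg: "strongly_graded G deg"
      show "\<forall>\<alpha>\<in>carrier G. (idempotents :: 'a set) = {sinv s * s | s. s \<in> gr_comp G deg \<alpha>}"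
        using p5[OF assms(1,2) sg _ i] by blast
    next
      assume h: "\<forall>\<alpha>\<in>carrier G. (idempotents :: 'a set) = {sinv s * s | s. s \<in> gr_comp G deg \<alpha>}"
      show "strongly_graded G deg" using from5[OF assms(1,2) i h] c3 by blast
    qed
    have e6: "strongly_graded G deg \<longleftrightarrow>
               (\<forall>u\<in>(idempotents :: 'a set). \<forall>\<alpha>\<in>carrier G. \<exists>s\<in>gr_comp G deg \<alpha>. green_L u s)"
    proof
      assume sg: "strongly_graded G deg"
      show "\<forall>u\<in>(idempotents :: 'a set). \<forall>\<alpha>\<in>carrier G. \<exists>s\<in>gr_comp G deg \<alpha>. green_L u s"
        using p6[OF assms(1,2) sg _ i] by blast
    next
      assume h: "\<forall>u\<in>(idempotents :: 'a set). \<forall>\<alpha>\<in>carrier G. \<exists>s\<in>gr_comp G deg \<alpha>. green_L u s"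
      show "strongly_graded G deg" using from6[OF assms(1,2) i h] c3 by blast
    qed
    have e7: "strongly_graded G deg \<longleftrightarrow>
               (\<forall>u\<in>(idempotents :: 'a set). \<forall>\<alpha>\<in>carrier G. \<exists>s\<in>gr_comp G deg \<alpha>. green_R u s)"
    proof
      assume sg: "strongly_graded G deg"
      show "\<forall>u\<in>(idempotents :: 'a set). \<forall>\<alpha>\<in>carrier G. \<exists>s\<in>gr_comp G deg \<alpha>. green_R u s"
        using p7[OF assms(1,2) sg _ i] by blast
    next
      assume h: "\<forall>u\<in>(idempotents :: 'a set). \<forall>\<alpha>\<in>carrier G. \<exists>s\<in>gr_comp G deg \<alpha>. green_R u s"
      show "strongly_graded G deg" using from7[OF assms(1,2) i h] c3 by blast
    qed
    show "(strongly_graded G deg \<longleftrightarrow>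
               (\<forall>\<alpha>\<in>carrier G. (idempotents :: 'a set) = {s * sinv s | s. s \<in> gr_comp G deg \<alpha>}))
          \<and> (strongly_graded G deg \<longleftrightarrow>
               (\<forall>\<alpha>\<in>carrier G. (idempotents :: 'a set) = {sinv s * s | s. s \<in> gr_comp G deg \<alpha>}))
          \<and> (strongly_graded G deg \<longleftrightarrow>
               (\<forall>u\<in>(idempotents :: 'a set). \<forall>\<alpha>\<in>carrier G. \<exists>s\<in>gr_comp G deg \<alpha>. green_L u s))
          \<and> (strongly_graded G deg \<longleftrightarrow>
               (\<forall>u\<in>(idempotents :: 'a set). \<forall>\<alpha>\<in>carrier G. \<exists>s\<in>gr_comp G deg \<alpha>. green_R u s))"
      using e4 e5 e6 e7 by (intro conjI)
  qed
  show ?thesis using c2 c3 inv by (intro conjI)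
qed

end
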